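(* Let $\alpha$ be a nonzero real number. Let $\gamma(t)=\Psi(u(t),v(t))$ be an $\alpha$-stationary curve in $\mathbb S^2$ which is not of constant curvature, parametrized by arc length $t$ and not passing through $N$. Then there is a constant $c>0$ such that, expressing $t$ and $v$ as functions of $u$, $$t(u)=\pm\int^u\frac{s^\alpha\sin(s)}{\sqrt{s^{2\alpha}\sin^2(s)-c^2}}\,ds,\qquad v(u)=\pm\int^u\frac{c}{\sin(s)\sqrt{s^{2\alpha}\sin^2(s)-c^2}}\,ds.$$
   Context: $\mathbb S^2\subset\mathbb R^3$ is the unit sphere with the Euclidean metric. It is parametrized by $\Psi(u,v)=(\sin u\cos v,\sin u\sin v,\cos u)$, and $N=(0,0,1)$. The spherical distance from $\Psi(u,v)$ to $N$ is $u\in(0,\pi)$, and the line element is $\sqrt{u'^2+\sin^2(u)v'^2}\,dt$. The energy is $$E_\alpha[\gamma]=\int u^\alpha\sqrt{u'^2+\sin^2(u)v'^2}\,dt.$$ An $\alpha$-stationary curve is a critical point of $E_\alpha$, i.e. $(u,v)$ satisfies its Euler–Lagrange equations. Equivalently, $\kappa=\alpha\langle\mathbf n,\xi\rangle/u$, with $\mathbf n=(\gamma'\times\gamma)/|\gamma'|$, $\kappa=\langle\gamma'',\mathbf n\rangle/|\gamma'|^2$, and $\xi=\Psi_u$. Throughout the paper, $\alpha\ne0$ and curves avoid $N$. Integrals $\int^u$ are indefinite. *)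

theory Defs
  imports "HOL-Analysis.Analysis"
begin

definition Psi :: "real \<Rightarrow> real \<Rightarrow> real^3" where
  "Psi u v = vector [sin u * cos v, sin u * sin v, cos u]"

definition speed :: "(real \<Rightarrow> real) \<Rightarrow> (real \<Rightarrow> real) \<Rightarrow> real \<Rightarrow> real" where
  "speed u v t = sqrt ((deriv u t)\<^sup>2 + (sin (u t))\<^sup>2 * (deriv v t)\<^sup>2)"

text \<open>alpha-stationary on the open parameter interval I: the Euler--Lagrange equations of
  the Lagrangian L = u^alpha sqrt(u'^2 + sin^2(u) v'^2) hold at every parameter in I.\<close>
definition alpha_stationary ::
  "real \<Rightarrow> real set \<Rightarrow> (real \<Rightarrow> real) \<Rightarrow> (real \<Rightarrow> real) \<Rightarrow> bool" where
  "alpha_stationary \<alpha> I u v \<longleftrightarrow>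
     (\<forall>t\<in>I.
        ((\<lambda>s. u s powr \<alpha> * deriv u s / speed u v s) has_real_derivative
            (\<alpha> * u t powr (\<alpha> - 1) * speed u v t
             + u t powr \<alpha> * sin (u t) * cos (u t) * (deriv v t)\<^sup>2 / speed u v t)) (at t)
      \<and> ((\<lambda>s. u s powr \<alpha> * (sin (u s))\<^sup>2 * deriv v s / speed u v s) has_real_derivative 0) (at t))"

definition curve :: "(real \<Rightarrow> real) \<Rightarrow> (real \<Rightarrow> real) \<Rightarrow> real \<Rightarrow> real^3" where
  "curve u v t = Psi (u t) (v t)"

definition curvature :: "(real \<Rightarrow> real) \<Rightarrow> (real \<Rightarrow> real) \<Rightarrow> real \<Rightarrow> real" where
  "curvature u v t =
     (let g1 = (\<lambda>s. vector_derivative (curve u v) (at s));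
          g2 = vector_derivative g1 (at t);
          n = (1 / norm (g1 t)) *\<^sub>R cross3 (g1 t) (curve u v t)
      in (g2 \<bullet> n) / (norm (g1 t))\<^sup>2)"

end

theory Submission imports Defs begin

lemma Psi_eq: "Psi x w = sin x *\<^sub>R vector [cos w, sin w, 0] + cos x *\<^sub>R (vector [0,0,1] :: real^3)"
  unfolding Psi_def by (simp add: vec_eq_iff forall_3 vector_3)

lemma curvature_zero:
  assumes I: "open I" "t \<in> I" and vc: "\<And>s. s \<in> I \<Longrightarrow> v s = v0"
    and ud: "\<And>s. s \<in> I \<Longrightarrow> u differentiable (at s)"
    and u2: "deriv u differentiable (at t)"
  shows "curvature u v t = 0"
proof -
  define A :: "real^3" where "A = vector [cos v0, sin v0, 0]"
  define B :: "real^3" where "B = vector [0,0,1]"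
  define P where "P = (\<lambda>x. sin x *\<^sub>R A + cos x *\<^sub>R B)"
  define P' where "P' = (\<lambda>x. cos x *\<^sub>R A - sin x *\<^sub>R B)"
  have cP: "curve u v s = P (u s)" if "s \<in> I" for s
    using vc[OF that] by (simp add: curve_def Psi_eq P_def A_def B_def)
  have g1: "vector_derivative (curve u v) (at s) = deriv u s *\<^sub>R P' (u s)" if s: "s \<in> I" for s
  proof -
    have du: "(u has_real_derivative deriv u s) (at s)"
      using ud[OF s] DERIV_deriv_iff_real_differentiable by blast
    have "((\<lambda>s. P (u s)) has_vector_derivative deriv u s *\<^sub>R P' (u s)) (at s)"
      unfolding P_def P'_def
      by (auto intro!: derivative_eq_intros du simp: algebra_simps)
    then have "(curve u v has_vector_derivative deriv u s *\<^sub>R P' (u s)) (at s)"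
      by (rule has_vector_derivative_transform_within_open[OF _ I(1) s]) (simp add: cP)
    then show ?thesis by (rule vector_derivative_at)
  qed
  have du: "(u has_real_derivative deriv u t) (at t)"
    using ud[OF I(2)] DERIV_deriv_iff_real_differentiable by blast
  have ddu: "(deriv u has_real_derivative deriv (deriv u) t) (at t)"
    using u2 DERIV_deriv_iff_real_differentiable by blast
  have "((\<lambda>s. deriv u s *\<^sub>R P' (u s)) has_vector_derivative
      deriv (deriv u) t *\<^sub>R P' (u t) - (deriv u t)\<^sup>2 *\<^sub>R P (u t)) (at t)"
    unfolding P_def P'_def
    by (auto intro!: derivative_eq_intros du ddu simp: algebra_simps power2_eq_square)
  then have "((\<lambda>s. vector_derivative (curve u v) (at s)) has_vector_derivative
      deriv (deriv u) t *\<^sub>R P' (u t) - (deriv u t)\<^sup>2 *\<^sub>R P (u t)) (at t)"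
    by (rule has_vector_derivative_transform_within_open[OF _ I]) (simp add: g1)
  then have g2: "vector_derivative (\<lambda>s. vector_derivative (curve u v) (at s)) (at t) =
      deriv (deriv u) t *\<^sub>R P' (u t) - (deriv u t)\<^sup>2 *\<^sub>R P (u t)"
    by (rule vector_derivative_at)
  show ?thesis
    unfolding curvature_def Let_def g2 g1[OF I(2)] cP[OF I(2)]
    by (simp add: cross_mult_left inner_diff_left dot_cross_self)
qed

theorem theorem3p6:
  fixes \<alpha> :: real and I :: "real set" and u v :: "real \<Rightarrow> real"
  assumes alpha_nz: "\<alpha> \<noteq> 0"
    and I_open: "open I" and I_interval: "is_interval I" and I_ne: "I \<noteq> {}"
    and u_C2: "\<And>t. t \<in> I \<Longrightarrow> u differentiable (at t) \<and> deriv u differentiable (at t)"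
    and v_C2: "\<And>t. t \<in> I \<Longrightarrow> v differentiable (at t) \<and> deriv v differentiable (at t)"
    and avoids_N: "\<And>t. t \<in> I \<Longrightarrow> 0 < u t \<and> u t < pi"
    and arclength: "\<And>t. t \<in> I \<Longrightarrow> (deriv u t)\<^sup>2 + (sin (u t))\<^sup>2 * (deriv v t)\<^sup>2 = 1"
    and stationary: "alpha_stationary \<alpha> I u v"
    and nonconst_curv: "\<not> (\<exists>k. \<forall>t\<in>I. curvature u v t = k)"
  shows "\<exists>c>0. \<forall>J. J \<subseteq> I \<longrightarrow> open J \<longrightarrow> is_interval J \<longrightarrow> J \<noteq> {}
            \<longrightarrow> (\<forall>t\<in>J. deriv u t \<noteq> 0) \<longrightarrow>
           (\<forall>w\<in>u ` J. c\<^sup>2 < (w powr \<alpha>)\<^sup>2 * (sin w)\<^sup>2) \<and>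
           (\<exists>\<sigma>1 \<sigma>2. \<sigma>1 \<in> {-1, 1} \<and> \<sigma>2 \<in> {-1, 1} \<and>
              (\<forall>w\<in>u ` J.
                 (inv_into J u has_real_derivative
                    \<sigma>1 * (w powr \<alpha> * sin w / sqrt ((w powr \<alpha>)\<^sup>2 * (sin w)\<^sup>2 - c\<^sup>2))) (at w)
               \<and> ((v \<circ> inv_into J u) has_real_derivative
                    \<sigma>2 * (c / (sin w * sqrt ((w powr \<alpha>)\<^sup>2 * (sin w)\<^sup>2 - c\<^sup>2)))) (at w)))"
proof -
  have sp1: "speed u v s = 1" if "s \<in> I" for s
    using arclength[OF that] by (simp add: speed_def)
  have convI: "convex I" using I_interval is_interval_convex by blast
  obtain c0 where c0: "\<forall>s\<in>I. u s powr \<alpha> * (sin (u s))\<^sup>2 * deriv v s / speed u v s = c0"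
    using has_field_derivative_zero_constant[OF convI, of "\<lambda>s. u s powr \<alpha> * (sin (u s))\<^sup>2 * deriv v s / speed u v s"]
      stationary unfolding alpha_stationary_def
    using has_field_derivative_at_within by blast
  have c0': "u s powr \<alpha> * (sin (u s))\<^sup>2 * deriv v s = c0" if "s \<in> I" for s
    using c0 sp1[OF that] that by auto
  have pos: "0 < u s powr \<alpha>" "0 < sin (u s)" if "s \<in> I" for s
    using avoids_N[OF that] by (auto intro: sin_gt_zero)
  have c0nz: "c0 \<noteq> 0"
  proof
    assume "c0 = 0"
    then have v0: "deriv v s = 0" if "s \<in> I" for s
      using c0'[OF that] pos[OF that] by simp
    obtain vv where vv: "\<forall>s\<in>I. v s = vv"
    proof (rule has_field_derivative_zero_constant[OF convI, of v, THEN exE])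
      fix x assume x: "x \<in> I"
      have "(v has_real_derivative deriv v x) (at x)"
        using v_C2[OF x] DERIV_deriv_iff_real_differentiable by blast
      then show "(v has_real_derivative 0) (at x within I)"
        using v0[OF x] has_field_derivative_at_within by auto
    qed auto
    have "\<forall>t\<in>I. curvature u v t = 0"
      using curvature_zero[OF I_open _ _ _ ] vv u_C2 by blast
    then show False using nonconst_curv by blast
  qed
  define c where "c = \<bar>c0\<bar>"
  have cpos: "c > 0" using c0nz c_def by simp
  have c2: "c\<^sup>2 = c0\<^sup>2" by (simp add: c_def)
  show ?thesis
  proof (rule exI[of _ c], intro conjI cpos allI impI)
    fix J assume JI: "J \<subseteq> I" and Jo: "open J" and Ji: "is_interval J" and Jne: "J \<noteq> {}"
      and dnz: "\<forall>t\<in>J. deriv u t \<noteq> 0"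
    have key: "c\<^sup>2 < (u t powr \<alpha>)\<^sup>2 * (sin (u t))\<^sup>2 \<and>
       sqrt ((u t powr \<alpha>)\<^sup>2 * (sin (u t))\<^sup>2 - c\<^sup>2) = u t powr \<alpha> * sin (u t) * \<bar>deriv u t\<bar>"
      if t: "t \<in> J" for t
    proof -
      have tI: "t \<in> I" using t JI by blast
      define p where "p = u t powr \<alpha>"
      define S where "S = sin (u t)"
      define d where "d = deriv u t"
      define e where "e = deriv v t"
      have p: "p > 0" and S: "S > 0" using pos[OF tI] p_def S_def by auto
      have pe: "p * S\<^sup>2 * e = c0" using c0'[OF tI] p_def S_def e_def by simp
      have ar: "d\<^sup>2 + S\<^sup>2 * e\<^sup>2 = 1" using arclength[OF tI] d_def S_def e_def by simp
      have dn: "d \<noteq> 0" using dnz t d_def by auto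
      have eq: "p\<^sup>2 * S\<^sup>2 - c\<^sup>2 = (p * S * d)\<^sup>2"
      proof -
        have "c\<^sup>2 = p\<^sup>2 * S\<^sup>2 * (S\<^sup>2 * e\<^sup>2)" unfolding c2 pe[symmetric] by (simp add: power2_eq_square)
        also have "\<dots> = p\<^sup>2 * S\<^sup>2 * (1 - d\<^sup>2)" using ar by (metis add_diff_cancel_left')
        finally show ?thesis by (simp add: algebra_simps power2_eq_square)
      qed
      have "0 < (p * S * d)\<^sup>2" using p S dn by simp
      then have "c\<^sup>2 < p\<^sup>2 * S\<^sup>2" using eq by linarith
      moreover have "sqrt (p\<^sup>2 * S\<^sup>2 - c\<^sup>2) = p * S * \<bar>d\<bar>"
        unfolding eq using p S by (simp add: abs_mult)
      ultimately show ?thesis unfolding p_def S_def d_def by simp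
    qed
    show "\<forall>w\<in>u ` J. c\<^sup>2 < (w powr \<alpha>)\<^sup>2 * (sin w)\<^sup>2" using key by blast
    have contd: "continuous_on J (deriv u)"
      using u_C2 JI by (meson continuous_at_imp_continuous_on differentiable_imp_continuous_within subsetD)
    have sign: "(\<forall>t\<in>J. 0 < deriv u t) \<or> (\<forall>t\<in>J. deriv u t < 0)"
    proof (rule ccontr)
      assume "\<not> ?thesis"
      then obtain a b where ab: "a \<in> J" "b \<in> J" "deriv u a \<le> 0" "deriv u b \<ge> 0"
        by (meson not_less)
      have "connected (deriv u ` J)"
        using connected_continuous_image[OF contd] Ji is_interval_connected_1 by blast
      then have "0 \<in> deriv u ` J"
        using ab unfolding is_interval_connected_1[symmetric] is_interval_1
        by (metis imageI)
      then show False using dnz by auto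
    qed
    obtain \<sigma>1 :: real where s1: "\<sigma>1 \<in> {-1,1}" "\<forall>t\<in>J. \<sigma>1 * deriv u t = \<bar>deriv u t\<bar>"
      using sign
    proof
      assume "\<forall>t\<in>J. 0 < deriv u t" then show ?thesis using that[of 1] by (simp add: abs_of_pos)
    next
      assume "\<forall>t\<in>J. deriv u t < 0" then show ?thesis using that[of "-1"] by (simp add: abs_of_neg)
    qed
    have incr: "\<sigma>1 * u a < \<sigma>1 * u b" if "a \<in> J" "b \<in> J" "a < b" for a b
    proof (rule DERIV_pos_imp_increasing[OF that(3)])
      fix x assume "a \<le> x" "x \<le> b"
      then have xJ: "x \<in> J" using Ji that unfolding is_interval_1 by blast
      have "(u has_real_derivative deriv u x) (at x)"
        using u_C2 xJ JI DERIV_deriv_iff_real_differentiable by blast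
      then have "((\<lambda>x. \<sigma>1 * u x) has_real_derivative \<sigma>1 * deriv u x) (at x)"
        by (auto intro!: derivative_eq_intros)
      moreover have "\<sigma>1 * deriv u x > 0" using s1 xJ dnz by auto
      ultimately show "\<exists>y. ((\<lambda>x. \<sigma>1 * u x) has_real_derivative y) (at x) \<and> 0 < y" by blast
    qed
    have inj: "inj_on u J"
    proof (rule inj_onI, rule ccontr)
      fix a b assume ab: "a \<in> J" "b \<in> J" "u a = u b" "a \<noteq> b"
      then show False using incr[of a b] incr[of b a] by (cases "a < b") auto
    qed
    have contu: "continuous_on J u"
      using u_C2 JI by (meson continuous_at_imp_continuous_on differentiable_imp_continuous_within subsetD)
    have invd: "(inv_into J u has_real_derivative 1 / deriv u t) (at (u t))" if t: "t \<in> J" for t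
    proof -
      have du: "(u has_real_derivative deriv u t) (at t)"
        using u_C2 t JI DERIV_deriv_iff_real_differentiable by blast
      have "(inv_into J u has_derivative (*) (1 / deriv u t)) (at (u t))"
        apply (rule has_derivative_inverse_strong[OF Jo t contu])
        using inj apply (simp add: inv_into_f_f)
        using du apply (simp add: has_field_derivative_def)
        using dnz t by (auto simp: fun_eq_iff)
      then show ?thesis by (simp add: has_field_derivative_def)
    qed
    define \<sigma>2 where "\<sigma>2 = \<sigma>1 * sgn c0"
    show "\<exists>\<sigma>1 \<sigma>2. \<sigma>1 \<in> {-1, 1} \<and> \<sigma>2 \<in> {-1, 1} \<and>
              (\<forall>w\<in>u ` J.
                 (inv_into J u has_real_derivative
                    \<sigma>1 * (w powr \<alpha> * sin w / sqrt ((w powr \<alpha>)\<^sup>2 * (sin w)\<^sup>2 - c\<^sup>2))) (at w)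
               \<and> ((v \<circ> inv_into J u) has_real_derivative
                    \<sigma>2 * (c / (sin w * sqrt ((w powr \<alpha>)\<^sup>2 * (sin w)\<^sup>2 - c\<^sup>2)))) (at w))"
    proof (intro exI conjI ballI)
      show "\<sigma>1 \<in> {-1,1}" by (rule s1(1))
      show "\<sigma>2 \<in> {-1,1}" using s1(1) c0nz by (auto simp: \<sigma>2_def sgn_if)
    next
      fix w assume "w \<in> u ` J"
      then obtain t where t: "t \<in> J" and w: "w = u t" by blast
      have tI: "t \<in> I" using t JI by blast
      define p where "p = u t powr \<alpha>"
      define S where "S = sin (u t)"
      define d where "d = deriv u t"
      define e where "e = deriv v t"
      have p: "p > 0" and S: "S > 0" using pos[OF tI] p_def S_def by auto
      have pe: "p * S\<^sup>2 * e = c0" using c0'[OF tI] p_def S_def e_def by simp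
      have dn: "d \<noteq> 0" using dnz t d_def by auto
      have sd: "\<sigma>1 * d = \<bar>d\<bar>" using s1 t d_def by auto
      have sq: "sqrt ((w powr \<alpha>)\<^sup>2 * (sin w)\<^sup>2 - c\<^sup>2) = p * S * \<bar>d\<bar>"
        using key[OF t] unfolding w p_def S_def d_def by simp
      have s1sq: "\<sigma>1 * \<sigma>1 = 1" using s1(1) by auto
      have "1 / d = \<sigma>1 * (p * S / (p * S * \<bar>d\<bar>))"
        using p S dn sd s1sq
        by (simp add: field_simps)
      then have "\<sigma>1 * (w powr \<alpha> * sin w / sqrt ((w powr \<alpha>)\<^sup>2 * (sin w)\<^sup>2 - c\<^sup>2)) = 1 / d"
        unfolding sq by (simp add: w p_def S_def)
      then show "(inv_into J u has_real_derivative
                    \<sigma>1 * (w powr \<alpha> * sin w / sqrt ((w powr \<alpha>)\<^sup>2 * (sin w)\<^sup>2 - c\<^sup>2))) (at w)"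
        using invd[OF t] by (simp only: w d_def)
      have dv: "(v has_real_derivative e) (at (inv_into J u w))"
        using v_C2[OF tI] DERIV_deriv_iff_real_differentiable inj t w e_def
        by (simp add: inv_into_f_f)
      have ch: "((v \<circ> inv_into J u) has_real_derivative e * (1 / d)) (at w)"
        using DERIV_chain[of v e "inv_into J u" w "1/d" UNIV] dv invd[OF t] w d_def by simp
      have cc: "c0 = sgn c0 * c" by (simp add: c_def sgn_mult_abs)
      have "e * (1 / d) = \<sigma>2 * (c / (S * (p * S * \<bar>d\<bar>)))"
      proof -
        have "e = c0 / (p * S\<^sup>2)" using pe p S by (simp add: field_simps)
        moreover have "1 / d = \<sigma>1 / \<bar>d\<bar>" using sd dn s1sq
          by (simp add: field_simps)
        ultimately have "e * (1 / d) = \<sigma>1 * c0 / (p * S\<^sup>2 * \<bar>d\<bar>)" by simp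
        also have "\<dots> = \<sigma>1 * (sgn c0 * c) / (S * (p * S * \<bar>d\<bar>))"
          using cc by (simp add: power2_eq_square mult_ac)
        also have "\<dots> = \<sigma>2 * (c / (S * (p * S * \<bar>d\<bar>)))"
          unfolding \<sigma>2_def by simp
        finally show ?thesis .
      qed
      then show "((v \<circ> inv_into J u) has_real_derivative
                    \<sigma>2 * (c / (sin w * sqrt ((w powr \<alpha>)\<^sup>2 * (sin w)\<^sup>2 - c\<^sup>2)))) (at w)"
      proof -
        have "\<sigma>2 * (c / (sin w * sqrt ((w powr \<alpha>)\<^sup>2 * (sin w)\<^sup>2 - c\<^sup>2))) = e * (1 / d)"
          unfolding sq using \<open>e * (1 / d) = _\<close> by (simp add: w S_def)
        then show ?thesis using ch by simp
      qed
    qed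
  qed
qed
end
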